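(* Let $k$ be a positive integer and $l\in\{k+2,k+3,k+4\}$. Let $N^l_k$ be the lattice ${\mathbb{Z}}^{l+1}$ with basis $\ell_0,\dots,\ell_l$ and scalar product $(\ell_0,\ell_0)=k$, $(\ell_i,\ell_i)=-1$ for $1\le i\le l$, $(\ell_i,\ell_j)=0$ for $i\ne j$, let $\omega=-\frac{k+2}{k}\ell_0+\ell_1+\dots+\ell_l$, and let $R^l_k$ be the set of $\ell\in N^l_k$ with $(\ell,\ell)=-2$ and $(\ell,\omega)=0$. Then the vectors $\pm(\ell_i-\ell_j)$ for $1\le i<j\le l$, together with $\pm\big(\ell_0-\sum_{i\in I}\ell_i\big)$ for subsets $I\subset\{1,\dots,l\}$ with $|I|=k+2$, lie in $R^l_k$ and form a root system of type $A_{k+1}\times A_1$ if $l=k+2$, $A_{k+3}$ if $l=k+3$, and $D_{k+4}$ if $l=k+4$.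
   Context: Root systems are taken with respect to the negative of the scalar product, which is positive definite on the orthogonal complement of $\omega$. *)

theory Defs
  imports "HOL-Analysis.Analysis"
begin

text \<open>Vectors are represented as functions nat => real (coordinates with respect to
  the basis l_0, l_1, ...); lattice vectors of N^l_k are integer valued and vanish
  beyond index l.\<close>

definition ell :: "nat \<Rightarrow> nat \<Rightarrow> real" where
  "ell i = (\<lambda>j. if j = i then 1 else 0)"

definition vneg :: "(nat \<Rightarrow> real) \<Rightarrow> nat \<Rightarrow> real" where
  "vneg v = (\<lambda>j. - v j)"

definition vdiff :: "(nat \<Rightarrow> real) \<Rightarrow> (nat \<Rightarrow> real) \<Rightarrow> nat \<Rightarrow> real" where
  "vdiff v w = (\<lambda>j. v j - w j)"

definition vsum :: "nat set \<Rightarrow> nat \<Rightarrow> real" where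
  "vsum I = (\<lambda>j. \<Sum>i\<in>I. ell i j)"

definition latN :: "nat \<Rightarrow> (nat \<Rightarrow> real) set" where
  "latN l = {v. (\<forall>i. v i \<in> \<int>) \<and> (\<forall>i>l. v i = 0)}"

definition form :: "nat \<Rightarrow> nat \<Rightarrow> (nat \<Rightarrow> real) \<Rightarrow> (nat \<Rightarrow> real) \<Rightarrow> real" where
  "form k l v w = real k * v 0 * w 0 - (\<Sum>i=1..l. v i * w i)"

definition omega :: "nat \<Rightarrow> nat \<Rightarrow> nat \<Rightarrow> real" where
  "omega k l = (\<lambda>j. if j = 0 then - (real k + 2) / real k else if j \<le> l then 1 else 0)"

definition rootsR :: "nat \<Rightarrow> nat \<Rightarrow> (nat \<Rightarrow> real) set" where
  "rootsR k l = {v \<in> latN l. form k l v v = -2 \<and> form k l v (omega k l) = 0}"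

definition listed_roots :: "nat \<Rightarrow> nat \<Rightarrow> (nat \<Rightarrow> real) set" where
  "listed_roots k l =
     {vdiff (ell i) (ell j) | i j. 1 \<le> i \<and> i < j \<and> j \<le> l}
   \<union> {vneg (vdiff (ell i) (ell j)) | i j. 1 \<le> i \<and> i < j \<and> j \<le> l}
   \<union> {vdiff (ell 0) (vsum I) | I. I \<subseteq> {1..l} \<and> card I = k + 2}
   \<union> {vneg (vdiff (ell 0) (vsum I)) | I. I \<subseteq> {1..l} \<and> card I = k + 2}"

definition rspan :: "(nat \<Rightarrow> real) set \<Rightarrow> (nat \<Rightarrow> real) set" where
  "rspan S = {x. \<exists>F c. finite F \<and> F \<subseteq> S \<and> x = (\<lambda>j. \<Sum>v\<in>F. c v * v j)}"

definition refl_Q :: "((nat \<Rightarrow> real) \<Rightarrow> (nat \<Rightarrow> real) \<Rightarrow> real) \<Rightarrow> (nat \<Rightarrow> real)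
    \<Rightarrow> (nat \<Rightarrow> real) \<Rightarrow> nat \<Rightarrow> real" where
  "refl_Q Q a b = (\<lambda>j. b j - (2 * Q b a / Q a a) * a j)"

definition root_system :: "((nat \<Rightarrow> real) \<Rightarrow> (nat \<Rightarrow> real) \<Rightarrow> real) \<Rightarrow> (nat \<Rightarrow> real) set \<Rightarrow> bool" where
  "root_system Q S \<longleftrightarrow>
     finite S \<and> (\<lambda>_. 0) \<notin> S \<and>
     (\<forall>x\<in>rspan S. x \<noteq> (\<lambda>_. 0) \<longrightarrow> Q x x > 0) \<and>
     (\<forall>a\<in>S. \<forall>b\<in>S. refl_Q Q a b \<in> S) \<and>
     (\<forall>a\<in>S. \<forall>b\<in>S. 2 * Q b a / Q a a \<in> \<int>) \<and>
     (\<forall>a\<in>S. \<forall>c::real. (\<lambda>j. c * a j) \<in> S \<longrightarrow> c = 1 \<or> c = -1)"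

definition root_iso :: "(nat \<Rightarrow> real) set \<Rightarrow> (nat \<Rightarrow> real) set \<Rightarrow> bool" where
  "root_iso S T \<longleftrightarrow>
     (\<exists>g :: (nat \<Rightarrow> real) \<Rightarrow> (nat \<Rightarrow> real).
        (\<forall>x y. g (\<lambda>j. x j + y j) = (\<lambda>j. g x j + g y j)) \<and>
        (\<forall>c x. g (\<lambda>j. c * x j) = (\<lambda>j. c * g x j)) \<and>
        inj_on g (rspan S) \<and> g ` S = T)"

text \<open>Standard models (in the standard Euclidean coordinates e_0, e_1, ...).\<close>
definition std_A :: "nat \<Rightarrow> (nat \<Rightarrow> real) set" where
  "std_A n = {vdiff (ell i) (ell j) | i j. i \<le> n \<and> j \<le> n \<and> i \<noteq> j}"

definition std_A_A1 :: "nat \<Rightarrow> (nat \<Rightarrow> real) set" where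
  "std_A_A1 n = std_A n \<union> {vdiff (ell (n+1)) (ell (n+2)), vdiff (ell (n+2)) (ell (n+1))}"

definition std_D :: "nat \<Rightarrow> (nat \<Rightarrow> real) set" where
  "std_D n = {(\<lambda>j. s * ell i j + t * ell i' j) | i i' s t.
                i < i' \<and> i' < n \<and> s \<in> {1, -1} \<and> t \<in> {1, -1}}"

end

theory Submission
  imports Defs
begin


definition rB :: "real \<Rightarrow> nat set \<Rightarrow> nat \<Rightarrow> real" where
  "rB s I = (\<lambda>m. if m = 0 then s else if m \<in> I then - s else 0)"

lemma rB_0: "rB s I 0 = s" by (simp add: rB_def)

lemma vsum_eq: "finite I \<Longrightarrow> vsum I m = (if m \<in> I then 1 else 0)"
  by (simp add: vsum_def ell_def)

lemma B_eq:
  assumes "I \<subseteq> {1..l}"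
  shows "vdiff (ell 0) (vsum I) = rB 1 I" "vneg (vdiff (ell 0) (vsum I)) = rB (-1) I"
proof -
  have f: "finite I" using assms finite_subset by blast
  have z: "0 \<notin> I" using assms by auto
  show "vdiff (ell 0) (vsum I) = rB 1 I"
    using f z by (auto simp: vdiff_def rB_def vsum_eq ell_def)
  show "vneg (vdiff (ell 0) (vsum I)) = rB (-1) I"
    using f z by (auto simp: vneg_def vdiff_def rB_def vsum_eq ell_def)
qed

lemma vneg_rB: "vneg (rB s I) = rB (-s) I"
  by (auto simp: vneg_def rB_def)

lemma vneg_A: "vneg (vdiff (ell i) (ell j)) = vdiff (ell j) (ell i)"
  by (auto simp: vneg_def vdiff_def)

lemma mem_listed:
  "v \<in> listed_roots k l \<longleftrightarrow>
   (\<exists>i j. 1 \<le> i \<and> i \<le> l \<and> 1 \<le> j \<and> j \<le> l \<and> i \<noteq> j \<and> v = vdiff (ell i) (ell j)) \<or>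
   (\<exists>s I. (s = 1 \<or> s = -1) \<and> I \<subseteq> {1..l} \<and> card I = k + 2 \<and> v = rB s I)"
proof
  assume "v \<in> listed_roots k l"
  then show "(\<exists>i j. 1 \<le> i \<and> i \<le> l \<and> 1 \<le> j \<and> j \<le> l \<and> i \<noteq> j \<and> v = vdiff (ell i) (ell j)) \<or>
   (\<exists>s I. (s = 1 \<or> s = -1) \<and> I \<subseteq> {1..l} \<and> card I = k + 2 \<and> v = rB s I)"
    unfolding listed_roots_def
    apply (elim UnE)
    subgoal apply (rule disjI1) apply clarsimp
      subgoal for i j apply (rule exI[of _ i], simp, rule exI[of _ j]) by simp done
    subgoal apply (rule disjI1) apply (clarsimp simp: vneg_A)
      subgoal for i j apply (rule exI[of _ j], simp, rule exI[of _ i]) by simp done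
    subgoal apply (rule disjI2) apply (clarsimp simp: B_eq)
      subgoal for I apply (rule exI[of _ 1], simp) apply (rule exI[of _ I]) by simp done
    subgoal apply (rule disjI2) apply (clarsimp simp: B_eq vneg_rB)
      subgoal for I apply (rule exI[of _ "-1"], simp) apply (rule exI[of _ I]) by simp done
    done
next
  assume "(\<exists>i j. 1 \<le> i \<and> i \<le> l \<and> 1 \<le> j \<and> j \<le> l \<and> i \<noteq> j \<and> v = vdiff (ell i) (ell j)) \<or>
   (\<exists>s I. (s = 1 \<or> s = -1) \<and> I \<subseteq> {1..l} \<and> card I = k + 2 \<and> v = rB s I)"
  then show "v \<in> listed_roots k l"
  proof
    assume "\<exists>i j. 1 \<le> i \<and> i \<le> l \<and> 1 \<le> j \<and> j \<le> l \<and> i \<noteq> j \<and> v = vdiff (ell i) (ell j)"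
    then obtain i j where h: "1 \<le> i" "i \<le> l" "1 \<le> j" "j \<le> l" "i \<noteq> j" "v = vdiff (ell i) (ell j)" by blast
    show ?thesis
    proof (cases "i < j")
      case True then show ?thesis using h unfolding listed_roots_def by blast
    next
      case False then have "j < i" using h by simp
      then show ?thesis using h unfolding listed_roots_def vneg_A by blast
    qed
  next
    assume "\<exists>s I. (s = 1 \<or> s = -1) \<and> I \<subseteq> {1..l} \<and> card I = k + 2 \<and> v = rB s I"
    then obtain s I where h: "s = 1 \<or> s = -1" "I \<subseteq> {1..l}" "card I = k + 2" "v = rB s I" by blast
    from h(1) show ?thesis
    proof
      assume "s = 1" then show ?thesis using h B_eq[OF h(2)] unfolding listed_roots_def by force
    next
      assume "s = -1" then show ?thesis using h B_eq[OF h(2)] unfolding listed_roots_def by force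
    qed
  qed
qed

lemma listed_B: "s = 1 \<or> s = -1 \<Longrightarrow> I \<subseteq> {1..l} \<Longrightarrow> card I = k + 2 \<Longrightarrow> rB s I \<in> listed_roots k l"
  unfolding mem_listed by blast

lemma listed_A: "1 \<le> i \<Longrightarrow> i \<le> l \<Longrightarrow> 1 \<le> j \<Longrightarrow> j \<le> l \<Longrightarrow> i \<noteq> j \<Longrightarrow> vdiff (ell i) (ell j) \<in> listed_roots k l"
  unfolding mem_listed by blast

lemma form_sym: "form k l v w = form k l w v"
  by (simp add: form_def mult.commute mult.left_commute)

lemma form_A:
  assumes "1 \<le> i" "i \<le> l" "1 \<le> j" "j \<le> l" "i \<noteq> j"
  shows "form k l (vdiff (ell i) (ell j)) w = w j - w i"
proof -
  have "(\<Sum>m=1..l. vdiff (ell i) (ell j) m * w m) = (\<Sum>m=1..l. (if m = i then w m else 0) - (if m = j then w m else 0))"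
    by (rule sum.cong) (auto simp: vdiff_def ell_def)
  also have "\<dots> = w i - w j" using assms by (simp add: sum_subtractf)
  finally show ?thesis using assms by (simp add: form_def vdiff_def ell_def)
qed

lemma form_B:
  assumes "I \<subseteq> {1..l}"
  shows "form k l (rB s I) w = s * (real k * w 0 + (\<Sum>m\<in>I. w m))"
proof -
  have "(\<Sum>m=1..l. rB s I m * w m) = (\<Sum>m=1..l. (if m \<in> I then - s * w m else 0))"
    by (rule sum.cong) (auto simp: rB_def)
  also have "\<dots> = (\<Sum>m\<in>{1..l} \<inter> I. - s * w m)"
    by (simp add: sum.inter_restrict[symmetric])
  also have "{1..l} \<inter> I = I" using assms by auto
  also have "(\<Sum>m\<in>I. - s * w m) = - s * (\<Sum>m\<in>I. w m)" by (simp add: sum_distrib_left)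
  finally show ?thesis by (simp add: form_def rB_def algebra_simps)
qed

lemma A_val: "vdiff (ell i) (ell j) m = (if m = i then 1 else 0) - (if m = j then 1 else 0)"
  by (simp add: vdiff_def ell_def)

lemma sum_A: "finite I \<Longrightarrow> (\<Sum>m\<in>I. vdiff (ell p) (ell q) m) = (if p \<in> I then 1 else 0) - (if q \<in> I then 1 else 0)"
  by (simp add: A_val sum_subtractf)

lemma sum_B: "finite I \<Longrightarrow> 0 \<notin> I \<Longrightarrow> (\<Sum>m\<in>I. rB t J m) = - t * real (card (I \<inter> J))"
proof -
  assume f: "finite I" and z: "0 \<notin> I"
  have "(\<Sum>m\<in>I. rB t J m) = (\<Sum>m\<in>I. if m \<in> J then - t else 0)"
    by (rule sum.cong) (use z in \<open>auto simp: rB_def\<close>)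
  also have "\<dots> = (\<Sum>m\<in>I \<inter> J. - t)" using f by (simp add: sum.inter_restrict[symmetric])
  also have "\<dots> = - t * real (card (I \<inter> J))" by simp
  finally show ?thesis .
qed

lemma omega_sum: "I \<subseteq> {1..l} \<Longrightarrow> (\<Sum>m\<in>I. omega k l m) = real (card I)"
proof -
  assume h: "I \<subseteq> {1..l}"
  have "(\<Sum>m\<in>I. omega k l m) = (\<Sum>m\<in>I. 1)"
    by (rule sum.cong) (use h in \<open>auto simp: omega_def\<close>)
  then show ?thesis by simp
qed

lemma listed_props:
  assumes "k > 0" "v \<in> listed_roots k l"
  shows "form k l v v = -2" "form k l v (omega k l) = 0" "\<forall>m. v m \<in> {-1, 0, 1}"
    "\<forall>m>l. v m = 0" "\<exists>m. \<bar>v m\<bar> = 1" "v = (\<lambda>m. v m)"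
proof -
  from assms(2)[unfolded mem_listed] have
    "(\<exists>i j. 1 \<le> i \<and> i \<le> l \<and> 1 \<le> j \<and> j \<le> l \<and> i \<noteq> j \<and> v = vdiff (ell i) (ell j)) \<or>
     (\<exists>s I. (s = 1 \<or> s = -1) \<and> I \<subseteq> {1..l} \<and> card I = k + 2 \<and> v = rB s I)" .
  then have "form k l v v = -2 \<and> form k l v (omega k l) = 0 \<and> (\<forall>m. v m \<in> {-1, 0, 1}) \<and>
    (\<forall>m>l. v m = 0) \<and> (\<exists>m. \<bar>v m\<bar> = 1)"
  proof
    assume "\<exists>i j. 1 \<le> i \<and> i \<le> l \<and> 1 \<le> j \<and> j \<le> l \<and> i \<noteq> j \<and> v = vdiff (ell i) (ell j)"
    then obtain i j where h: "1 \<le> i" "i \<le> l" "1 \<le> j" "j \<le> l" "i \<noteq> j" "v = vdiff (ell i) (ell j)" by blast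
    have "\<bar>v i\<bar> = 1" using h by (simp add: A_val)
    moreover have "\<forall>m. v m \<in> {-1, 0, 1}" using h by (simp add: A_val)
    moreover have "\<forall>m>l. v m = 0" using h by (simp add: A_val)
    moreover have "form k l v v = -2" using h by (simp add: form_A A_val)
    moreover have "form k l v (omega k l) = 0" using h by (simp add: form_A omega_def)
    ultimately show ?thesis by blast
  next
    assume "\<exists>s I. (s = 1 \<or> s = -1) \<and> I \<subseteq> {1..l} \<and> card I = k + 2 \<and> v = rB s I"
    then obtain s I where h: "s = 1 \<or> s = -1" "I \<subseteq> {1..l}" "card I = k + 2" "v = rB s I" by blast
    have f: "finite I" using h(2) finite_subset by blast
    have z: "0 \<notin> I" using h(2) by auto
    have "\<bar>v 0\<bar> = 1" using h by (auto simp: rB_def)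
    moreover have "\<forall>m. v m \<in> {-1, 0, 1}" using h by (auto simp: rB_def)
    moreover have "\<forall>m>l. v m = 0" using h by (auto simp: rB_def)
    moreover have "form k l v v = -2"
    proof -
      have "form k l v v = s * (real k * s + - s * real (card (I \<inter> I)))"
        using h(2) f z by (simp add: h(4) form_B sum_B rB_0 del: Int_absorb)
      also have "\<dots> = (s * s) * (real k - real (k + 2))" using h(3) by (simp add: algebra_simps)
      also have "s * s = 1" using h(1) by auto
      finally show ?thesis by simp
    qed
    moreover have "form k l v (omega k l) = 0"
    proof -
      have "form k l v (omega k l) = s * (real k * omega k l 0 + real (card I))"
        using h(2) by (simp add: h(4) form_B omega_sum)
      also have "real k * omega k l 0 = - (real k + 2)" using assms(1) by (simp add: omega_def)
      finally show ?thesis using h(3) by simp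
    qed
    ultimately show ?thesis by blast
  qed
  then show "form k l v v = -2" "form k l v (omega k l) = 0" "\<forall>m. v m \<in> {-1, 0, 1}"
    "\<forall>m>l. v m = 0" "\<exists>m. \<bar>v m\<bar> = 1" "v = (\<lambda>m. v m)" by auto
qed

lemma listed_sub: "k > 0 \<Longrightarrow> listed_roots k l \<subseteq> rootsR k l"
proof
  fix v assume k: "k > 0" and v: "v \<in> listed_roots k l"
  have "\<forall>m. v m \<in> \<int>"
  proof
    fix m show "v m \<in> \<int>" using listed_props(3)[OF k v, rule_format, of m] by auto
  qed
  then show "v \<in> rootsR k l" using listed_props[OF k v]
    by (auto simp: rootsR_def latN_def)
qed


lemma refl_eq:
  assumes "form k l a a = -2"
  shows "refl_Q (\<lambda>v w. - form k l v w) a b = (\<lambda>m. b m + form k l a b * a m)"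
  using assms by (simp add: refl_Q_def form_sym[of k l b a])

definition sw :: "nat \<Rightarrow> nat \<Rightarrow> nat \<Rightarrow> nat" where
  "sw i j m = (if m = i then j else if m = j then i else m)"

lemma sw_sw[simp]: "sw i j (sw i j m) = m" by (simp add: sw_def)

lemma sw_inj: "inj (sw i j)" by (metis injI sw_sw)

lemma reflA:
  assumes "1 \<le> i" "i \<le> l" "1 \<le> j" "j \<le> l" "i \<noteq> j"
  shows "(\<lambda>m. b m + form k l (vdiff (ell i) (ell j)) b * vdiff (ell i) (ell j) m) = (\<lambda>m. b (sw i j m))"
  using assms by (auto simp: form_A A_val sw_def)

lemma swap_closed:
  assumes "1 \<le> i" "i \<le> l" "1 \<le> j" "j \<le> l" "i \<noteq> j" "b \<in> listed_roots k l"
  shows "(\<lambda>m. b (sw i j m)) \<in> listed_roots k l"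
proof -
  from assms(6)[unfolded mem_listed] show ?thesis
  proof
    assume "\<exists>p q. 1 \<le> p \<and> p \<le> l \<and> 1 \<le> q \<and> q \<le> l \<and> p \<noteq> q \<and> b = vdiff (ell p) (ell q)"
    then obtain p q where h: "1 \<le> p" "p \<le> l" "1 \<le> q" "q \<le> l" "p \<noteq> q" "b = vdiff (ell p) (ell q)" by blast
    have e: "(\<lambda>m. b (sw i j m)) = vdiff (ell (sw i j p)) (ell (sw i j q))"
      using h by (auto simp: A_val sw_def)
    have "1 \<le> sw i j p \<and> sw i j p \<le> l \<and> 1 \<le> sw i j q \<and> sw i j q \<le> l \<and> sw i j p \<noteq> sw i j q"
      using h assms by (auto simp: sw_def)
    then show ?thesis unfolding mem_listed e by blast
  next
    assume "\<exists>t J. (t = 1 \<or> t = -1) \<and> J \<subseteq> {1..l} \<and> card J = k + 2 \<and> b = rB t J"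
    then obtain t J where h: "t = 1 \<or> t = -1" "J \<subseteq> {1..l}" "card J = k + 2" "b = rB t J" by blast
    have e: "(\<lambda>m. b (sw i j m)) = rB t (sw i j ` J)"
    proof
      fix m
      have "sw i j m = 0 \<longleftrightarrow> m = 0" using assms by (auto simp: sw_def)
      moreover have "sw i j m \<in> J \<longleftrightarrow> m \<in> sw i j ` J" by (metis image_iff sw_sw)
      ultimately show "b (sw i j m) = rB t (sw i j ` J) m" using h by (simp add: rB_def)
    qed
    have "sw i j ` J \<subseteq> {1..l}" using h(2) assms by (auto simp: sw_def)
    moreover have "card (sw i j ` J) = k + 2" using h(3) card_image[OF inj_on_subset[OF sw_inj]] by auto
    ultimately show ?thesis unfolding mem_listed e using h(1) by blast
  qed
qed

lemma reflB_A:
  assumes s: "s = 1 \<or> s = -1" and I: "I \<subseteq> {1..l}" "card I = k + 2"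
    and h: "1 \<le> p" "p \<le> l" "1 \<le> q" "q \<le> l" "p \<noteq> q"
  shows "(\<lambda>m. vdiff (ell p) (ell q) m + form k l (rB s I) (vdiff (ell p) (ell q)) * rB s I m) \<in> listed_roots k l"
proof -
  have f: "finite I" using I finite_subset by blast
  have z: "0 \<notin> I" using I by auto
  have F: "form k l (rB s I) (vdiff (ell p) (ell q)) = s * ((if p \<in> I then 1 else 0) - (if q \<in> I then 1 else 0))"
  proof -
    have "vdiff (ell p) (ell q) 0 = 0" using h by (simp add: A_val)
    then show ?thesis using I(1) f by (simp add: form_B sum_A)
  qed
  consider "p \<in> I \<longleftrightarrow> q \<in> I" | "p \<in> I" "q \<notin> I" | "p \<notin> I" "q \<in> I" by blast
  then show ?thesis
  proof cases
    case 1
    then have "(\<lambda>m. vdiff (ell p) (ell q) m + form k l (rB s I) (vdiff (ell p) (ell q)) * rB s I m) = vdiff (ell p) (ell q)"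
      by (auto simp: F)
    then show ?thesis unfolding mem_listed using h by auto
  next
    case 2
    have "(\<lambda>m. vdiff (ell p) (ell q) m + form k l (rB s I) (vdiff (ell p) (ell q)) * rB s I m) = rB 1 (insert q (I - {p}))"
      unfolding F by (rule ext) (use 2 s z h in \<open>auto simp: rB_def A_val\<close>)
    moreover have "insert q (I - {p}) \<subseteq> {1..l}" using I h by auto
    moreover have "card (insert q (I - {p})) = k + 2" using 2 f I(2) by (simp add: card_Diff_singleton)
    ultimately show ?thesis using listed_B[of 1] by auto
  next
    case 3
    have "(\<lambda>m. vdiff (ell p) (ell q) m + form k l (rB s I) (vdiff (ell p) (ell q)) * rB s I m) = rB (-1) (insert p (I - {q}))"
      unfolding F by (rule ext) (use 3 s z h in \<open>auto simp: rB_def A_val\<close>)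
    moreover have "insert p (I - {q}) \<subseteq> {1..l}" using I h by auto
    moreover have "card (insert p (I - {q})) = k + 2" using 3 f I(2) by (simp add: card_Diff_singleton)
    ultimately show ?thesis using listed_B[of "-1"] by auto
  qed
qed





lemma reflB_B:
  assumes s: "s = 1 \<or> s = -1" and I: "I \<subseteq> {1..l}" "card I = k + 2"
    and t: "t = 1 \<or> t = -1" and J: "J \<subseteq> {1..l}" "card J = k + 2" and l: "l \<le> k + 4"
  shows "(\<lambda>m. rB t J m + form k l (rB s I) (rB t J) * rB s I m) \<in> listed_roots k l"
proof -
  have fI: "finite I" using I finite_subset by blast
  have fJ: "finite J" using J finite_subset by blast
  have zI: "0 \<notin> I" using I by auto
  have zJ: "0 \<notin> J" using J by auto
  define c where "c = card (I \<inter> J)"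
  have F: "form k l (rB s I) (rB t J) = s * (real k * t - t * real c)"
    using I(1) fI zI by (simp add: form_B sum_B rB_0 c_def)
  have cu: "card (I \<union> J) \<le> l"
    using card_mono[of "{1..l}" "I \<union> J"] I J by auto
  have "card (I \<union> J) + card (I \<inter> J) = card I + card J" using card_Un_Int[OF fI fJ] by simp
  then have c1: "k \<le> c" using cu l I(2) J(2) unfolding c_def by linarith
  have c2: "c \<le> k + 2" unfolding c_def using card_mono[OF fI, of "I \<inter> J"] I(2) by auto
  have ss: "s * s = 1" using s by auto
  consider "c = k" | "c = k + 1" | "c = k + 2" using c1 c2 by linarith
  then show ?thesis
  proof cases
    case 1
    then have "(\<lambda>m. rB t J m + form k l (rB s I) (rB t J) * rB s I m) = rB t J" by (simp add: F)
    then show ?thesis using listed_B[OF t J] by simp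
  next
    case 3
    have "I \<inter> J = I" using 3 card_subset_eq[OF fI, of "I \<inter> J"] I(2) unfolding c_def by auto
    moreover have "I \<inter> J = J" using 3 card_subset_eq[OF fJ, of "I \<inter> J"] J(2) unfolding c_def by auto
    ultimately have IJ: "I = J" by simp
    have "(\<lambda>m. rB t J m + form k l (rB s I) (rB t J) * rB s I m) = rB (-t) I"
    proof
      fix m
      have "rB t J m + form k l (rB s I) (rB t J) * rB s I m = rB t I m - 2 * t * (s * rB s I m)"
        unfolding F 3 by (simp add: IJ algebra_simps)
      also have "s * rB s I m = (if m = 0 then 1 else if m \<in> I then -1 else 0)"
        using s by (auto simp: rB_def)
      finally show "rB t J m + form k l (rB s I) (rB t J) * rB s I m = rB (-t) I m"
        by (simp add: rB_def)
    qed
    moreover have "-t = 1 \<or> -t = -1" using t by auto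
    ultimately show ?thesis using listed_B[OF _ I, of "-t"] by simp
  next
    case 2
    have "card (I - J) = card I - card (I \<inter> J)" by (rule card_Diff_subset_Int) (use fI in auto)
    then have "card (I - J) = 1" using 2 I(2) unfolding c_def by simp
    then obtain a where a: "I - J = {a}" by (rule card_1_singletonE)
    have "card (J - I) = card J - card (J \<inter> I)" by (rule card_Diff_subset_Int) (use fJ in auto)
    then have "card (J - I) = 1" using 2 J(2) unfolding c_def by (simp add: Int_commute)
    then obtain b where b: "J - I = {b}" by (rule card_1_singletonE)
    have aI: "a \<in> I" "a \<notin> J" using a by auto
    have bJ: "b \<in> J" "b \<notin> I" using b by auto
    have ab: "1 \<le> a" "a \<le> l" "1 \<le> b" "b \<le> l" "a \<noteq> b" using aI bJ I J by auto
    have E: "(\<lambda>m. rB t J m + form k l (rB s I) (rB t J) * rB s I m) = (\<lambda>m. t * vdiff (ell a) (ell b) m)"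
    proof
      fix m
      have "rB t J m + form k l (rB s I) (rB t J) * rB s I m = rB t J m - t * (s * rB s I m)"
        unfolding F 2 by (simp add: algebra_simps)
      also have "s * rB s I m = (if m = 0 then 1 else if m \<in> I then -1 else 0)"
        using s by (auto simp: rB_def)
      also have "rB t J m - t * (if m = 0 then 1 else if m \<in> I then -1 else 0) = t * vdiff (ell a) (ell b) m"
      proof -
        consider "m = 0" | "m \<noteq> 0" "m \<in> I" "m \<in> J" | "m = a" | "m = b" | "m \<notin> I" "m \<notin> J"
          using a b by blast
        then show ?thesis
        proof cases
          case 1 then show ?thesis using ab by (simp add: rB_def A_val)
        next
          case 2 then have "m \<noteq> a" "m \<noteq> b" using aI bJ by auto
          then show ?thesis using 2 by (simp add: rB_def A_val)
        next
          case 3 then show ?thesis using aI ab by (simp add: rB_def A_val)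
        next
          case 4 then show ?thesis using bJ ab by (simp add: rB_def A_val)
        next
          case 5 then have "m \<noteq> a" "m \<noteq> b" using aI bJ by auto
          then show ?thesis using 5 by (simp add: rB_def A_val)
        qed
      qed
      finally show "rB t J m + form k l (rB s I) (rB t J) * rB s I m = t * vdiff (ell a) (ell b) m" .
    qed
    from t show ?thesis
    proof
      assume "t = 1" then show ?thesis using E listed_A[OF ab] by simp
    next
      assume "t = -1"
      then have "(\<lambda>m. t * vdiff (ell a) (ell b) m) = vdiff (ell b) (ell a)" by (auto simp: A_val)
      then show ?thesis using E listed_A[of b l a k] ab by simp
    qed
  qed
qed




lemma form_add: "form k l (\<lambda>j. a j + b j) w = form k l a w + form k l b w"
  by (simp add: form_def algebra_simps sum.distrib)

lemma form_scale: "form k l (\<lambda>j. c * a j) w = c * form k l a w"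
  by (simp add: form_def algebra_simps sum_distrib_left)

lemma form_lin: "finite F \<Longrightarrow> form k l (\<lambda>j. \<Sum>v\<in>F. c v * v j) w = (\<Sum>v\<in>F. c v * form k l v w)"
proof (induction F rule: finite_induct)
  case empty then show ?case by (simp add: form_def)
next
  case (insert x F)
  have "form k l (\<lambda>j. \<Sum>v\<in>insert x F. c v * v j) w = form k l (\<lambda>j. c x * x j + (\<Sum>v\<in>F. c v * v j)) w"
    using insert by simp
  also have "\<dots> = c x * form k l x w + form k l (\<lambda>j. \<Sum>v\<in>F. c v * v j) w"
    using form_add[of k l "\<lambda>j. c x * x j" "\<lambda>j. \<Sum>v\<in>F. c v * v j" w] form_scale by simp
  finally show ?case using insert by simp
qed

lemma span_props:
  assumes k: "k > 0" and x: "x \<in> rspan (listed_roots k l)"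
  shows "\<forall>m>l. x m = 0" "form k l x (omega k l) = 0"
proof -
  obtain F c where F: "finite F" "F \<subseteq> listed_roots k l" "x = (\<lambda>j. \<Sum>v\<in>F. c v * v j)"
    using x unfolding rspan_def by blast
  show "\<forall>m>l. x m = 0"
  proof (intro allI impI)
    fix m assume "m > l"
    then have "\<forall>v\<in>F. v m = 0" using F(2) listed_props(4)[OF k] by blast
    then show "x m = 0" using F(3) by (auto intro!: sum.neutral)
  qed
  have "\<forall>v\<in>F. form k l v (omega k l) = 0" using F(2) listed_props(2)[OF k] by blast
  then show "form k l x (omega k l) = 0" using F by (simp add: form_lin)
qed

lemma posdef:
  assumes k: "k > 0" and l: "l \<le> k + 4" "l \<ge> 1" and x: "x \<in> rspan (listed_roots k l)" and nz: "x \<noteq> (\<lambda>_. 0)"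
  shows "- form k l x x > 0"
proof -
  have van: "\<forall>m>l. x m = 0" and orth: "form k l x (omega k l) = 0" using span_props[OF k x] by auto
  define S where "S = (\<Sum>m=1..l. x m)"
  define d :: real where "d = real k + 2"
  have "form k l x (omega k l) = real k * x 0 * (- (real k + 2) / real k) - S"
  proof -
    have "(\<Sum>m=1..l. x m * omega k l m) = S" unfolding S_def by (rule sum.cong) (auto simp: omega_def)
    then show ?thesis by (simp add: form_def omega_def)
  qed
  then have "real k * (S + d * x 0) = 0" using orth k by (simp add: d_def field_simps)
  then have S: "S = - d * x 0" using k by simp
  define Q where "Q = (\<Sum>m=1..l. (x m)^2)"
  have Qf: "- form k l x x = Q - real k * (x 0)^2" by (simp add: form_def Q_def power2_eq_square)
  have "(\<Sum>m=1..l. (real l * x m + d * x 0)^2) = (\<Sum>m=1..l. real l ^2 * (x m)^2 + (2 * real l * d * x 0) * x m + (d * x 0)^2)"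
    by (rule sum.cong) (simp_all add: power2_eq_square algebra_simps)
  also have "\<dots> = real l ^2 * Q + (2 * real l * d * x 0) * S + real l * (d * x 0)^2"
    by (simp add: sum.distrib sum_distrib_left Q_def S_def)
  finally have id: "real l ^2 * (Q - real k * (x 0)^2) = (\<Sum>m=1..l. (real l * x m + d * x 0)^2) + real l * (d^2 - real l * real k) * (x 0)^2"
    unfolding S by (simp add: algebra_simps power2_eq_square)
  have dd: "d^2 - real l * real k \<ge> 4"
  proof -
    have "real l * real k \<le> (real k + 4) * real k" using l by (intro mult_right_mono) auto
    then show ?thesis by (simp add: d_def power2_eq_square algebra_simps)
  qed
  have lpos: "real l > 0" using l by simp
  show ?thesis
  proof (cases "x 0 = 0")
    case False
    have "real l * (d^2 - real l * real k) * (x 0)^2 > 0" using False lpos dd by (intro mult_pos_pos) auto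
    moreover have "(\<Sum>m=1..l. (real l * x m + d * x 0)^2) \<ge> 0" by (intro sum_nonneg) auto
    ultimately have "real l ^2 * (Q - real k * (x 0)^2) > 0" using id by linarith
    moreover have "real l ^2 > 0" using lpos by simp
    ultimately have "Q - real k * (x 0)^2 > 0" by (rule zero_less_mult_pos)
    then show ?thesis using Qf by linarith
  next
    case True
    obtain m where m: "x m \<noteq> 0" using nz by auto
    have "m \<noteq> 0" using m True by (metis)
    moreover have "m \<le> l" using m van by (meson not_le)
    ultimately have m1: "1 \<le> m" "m \<le> l" by auto
    have "Q > 0" unfolding Q_def
    proof (rule ccontr)
      assume "\<not> 0 < (\<Sum>m = 1..l. (x m)\<^sup>2)"
      then have "(\<Sum>m = 1..l. (x m)\<^sup>2) = 0" using sum_nonneg[of "{1..l}" "\<lambda>m. (x m)^2"] by auto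
      then have "\<forall>i\<in>{1..l}. (x i)^2 = 0" by (subst (asm) sum_nonneg_eq_0_iff) auto
      then show False using m m1 by auto
    qed
    then show ?thesis using Qf True by simp
  qed
qed


lemma form_Ints: "(\<forall>m. v m \<in> \<int>) \<Longrightarrow> (\<forall>m. w m \<in> \<int>) \<Longrightarrow> form k l v w \<in> \<int>"
  unfolding form_def by (intro Ints_diff Ints_mult Ints_sum Ints_of_nat) auto

lemma listed_Ints: "k > 0 \<Longrightarrow> v \<in> listed_roots k l \<Longrightarrow> \<forall>m. v m \<in> \<int>"
proof
  fix m assume "k > 0" "v \<in> listed_roots k l"
  then have "v m \<in> {-1, 0, 1}" using listed_props(3) by blast
  then show "v m \<in> \<int>" by auto
qed

lemma listed_finite: "finite (listed_roots k l)"
proof (rule finite_subset)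
  show "listed_roots k l \<subseteq> (\<lambda>(i,j). vdiff (ell i) (ell j)) ` ({1..l} \<times> {1..l}) \<union> (\<lambda>(s,I). rB s I) ` ({1,-1} \<times> Pow {1..l})"
  proof
    fix v assume "v \<in> listed_roots k l"
    then show "v \<in> (\<lambda>(i,j). vdiff (ell i) (ell j)) ` ({1..l} \<times> {1..l}) \<union> (\<lambda>(s,I). rB s I) ` ({1,-1} \<times> Pow {1..l})"
      unfolding mem_listed by force
  qed
qed auto

lemma refl_closed:
  assumes k: "k > 0" and l: "l \<le> k + 4" and a: "a \<in> listed_roots k l" and b: "b \<in> listed_roots k l"
  shows "refl_Q (\<lambda>v w. - form k l v w) a b \<in> listed_roots k l"
proof -
  have r: "refl_Q (\<lambda>v w. - form k l v w) a b = (\<lambda>m. b m + form k l a b * a m)"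
    by (rule refl_eq) (rule listed_props(1)[OF k a])
  from a[unfolded mem_listed] show ?thesis
  proof
    assume "\<exists>i j. 1 \<le> i \<and> i \<le> l \<and> 1 \<le> j \<and> j \<le> l \<and> i \<noteq> j \<and> a = vdiff (ell i) (ell j)"
    then obtain i j where h: "1 \<le> i" "i \<le> l" "1 \<le> j" "j \<le> l" "i \<noteq> j" "a = vdiff (ell i) (ell j)" by blast
    show ?thesis unfolding r unfolding h(6) reflA[OF h(1-5)] by (rule swap_closed[OF h(1-5) b])
  next
    assume "\<exists>s I. (s = 1 \<or> s = -1) \<and> I \<subseteq> {1..l} \<and> card I = k + 2 \<and> a = rB s I"
    then obtain s I where h: "s = 1 \<or> s = -1" "I \<subseteq> {1..l}" "card I = k + 2" "a = rB s I" by blast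
    from b[unfolded mem_listed] show ?thesis
    proof
      assume "\<exists>p q. 1 \<le> p \<and> p \<le> l \<and> 1 \<le> q \<and> q \<le> l \<and> p \<noteq> q \<and> b = vdiff (ell p) (ell q)"
      then obtain p q where g: "1 \<le> p" "p \<le> l" "1 \<le> q" "q \<le> l" "p \<noteq> q" "b = vdiff (ell p) (ell q)" by blast
      show ?thesis unfolding r unfolding h(4) g(6) by (rule reflB_A[OF h(1-3) g(1-5)])
    next
      assume "\<exists>t J. (t = 1 \<or> t = -1) \<and> J \<subseteq> {1..l} \<and> card J = k + 2 \<and> b = rB t J"
      then obtain t J where g: "t = 1 \<or> t = -1" "J \<subseteq> {1..l}" "card J = k + 2" "b = rB t J" by blast
      show ?thesis unfolding r unfolding h(4) g(4) by (rule reflB_B[OF h(1-3) g(1-3) l])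
    qed
  qed
qed

lemma is_root_system:
  assumes k: "k > 0" and l: "l \<le> k + 4" "l \<ge> 1"
  shows "root_system (\<lambda>v w. - form k l v w) (listed_roots k l)"
  unfolding root_system_def
proof (intro conjI ballI allI impI)
  show "finite (listed_roots k l)" by (rule listed_finite)
  show "(\<lambda>_. 0) \<notin> listed_roots k l"
  proof
    assume "(\<lambda>_. 0::real) \<in> listed_roots k l"
    from listed_props(5)[OF k this] show False by simp
  qed
  fix x assume "x \<in> rspan (listed_roots k l)" "x \<noteq> (\<lambda>_. 0)"
  then show "0 < - form k l x x" by (rule posdef[OF k l])
next
  fix a b assume a: "a \<in> listed_roots k l" and b: "b \<in> listed_roots k l"
  show "refl_Q (\<lambda>v w. - form k l v w) a b \<in> listed_roots k l" by (rule refl_closed[OF k l(1) a b])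
  have "2 * - form k l b a / - form k l a a = - form k l b a"
    using listed_props(1)[OF k a] by simp
  moreover have "form k l b a \<in> \<int>" by (intro form_Ints listed_Ints[OF k a] listed_Ints[OF k b])
  ultimately show "2 * - form k l b a / - form k l a a \<in> \<int>" by simp
next
  fix a c assume a: "a \<in> listed_roots k l" and ca: "(\<lambda>j. c * a j) \<in> listed_roots k l"
  obtain m where m: "\<bar>a m\<bar> = 1" using listed_props(5)[OF k a] by blast
  have "c * a m \<in> {-1, 0, 1}" using listed_props(3)[OF k ca] by blast
  then have "\<bar>c * a m\<bar> = 1 \<or> c * a m = 0" by auto
  then have c01: "\<bar>c\<bar> = 1 \<or> c = 0" using m by (auto simp: abs_mult)
  have "c \<noteq> 0"
  proof
    assume "c = 0"
    then have "(\<lambda>_. 0::real) \<in> listed_roots k l" using ca by simp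
    from listed_props(5)[OF k this] show False by simp
  qed
  then show "c = 1 \<or> c = -1" using c01 by auto
qed




lemma iso_intro:
  assumes "\<And>x y. g (\<lambda>j. x j + y j) = (\<lambda>j. g x j + g y j)" "\<And>c x. g (\<lambda>j. c * x j) = (\<lambda>j. c * g x j)"
    "inj_on g (rspan S)" "g ` S = T"
  shows "root_iso S T"
  unfolding root_iso_def using assms by blast

lemma card_compl1:
  assumes "I \<subseteq> {1..l}" "card I + 1 = l"
  obtains a where "1 \<le> a" "a \<le> l" "I = {1..l} - {a}"
proof -
  have "card ({1..l} - I) = 1" using assms by (simp add: card_Diff_subset finite_subset)
  then obtain a where a: "{1..l} - I = {a}" by (rule card_1_singletonE)
  then have "I = {1..l} - {a}" using assms(1) by blast
  moreover have "1 \<le> a" "a \<le> l" using a by auto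
  ultimately show ?thesis using that by blast
qed

lemma stdA_mem: "i \<le> n \<Longrightarrow> j \<le> n \<Longrightarrow> i \<noteq> j \<Longrightarrow> vdiff (ell i) (ell j) \<in> std_A n"
  unfolding std_A_def by blast

definition g3 :: "nat \<Rightarrow> (nat \<Rightarrow> real) \<Rightarrow> nat \<Rightarrow> real" where
  "g3 l x = (\<lambda>j. if j = 0 then - x 0 else if j \<le> l then x j + x 0 else 0)"

lemma iso3:
  assumes k: "k > 0" and l: "l = k + 3"
  shows "root_iso (listed_roots k l) (std_A (k + 3))"
proof (rule iso_intro[where g = "g3 l"])
  show "\<And>x y. g3 l (\<lambda>j. x j + y j) = (\<lambda>j. g3 l x j + g3 l y j)" by (auto simp: g3_def)
  show "\<And>c x. g3 l (\<lambda>j. c * x j) = (\<lambda>j. c * g3 l x j)" by (auto simp: g3_def algebra_simps)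
  show "inj_on (g3 l) (rspan (listed_roots k l))"
  proof (rule inj_onI)
    fix x y assume x: "x \<in> rspan (listed_roots k l)" and y: "y \<in> rspan (listed_roots k l)" and e: "g3 l x = g3 l y"
    have vx: "\<forall>m>l. x m = 0" and vy: "\<forall>m>l. y m = 0" using span_props(1)[OF k x] span_props(1)[OF k y] by auto
    have 0: "x 0 = y 0" using fun_cong[OF e, of 0] by (simp add: g3_def)
    show "x = y"
    proof
      fix m
      show "x m = y m"
      proof (cases "m = 0")
        case True then show ?thesis using 0 by simp
      next
        case False
        show ?thesis
        proof (cases "m \<le> l")
          case True then show ?thesis using fun_cong[OF e, of m] 0 False by (simp add: g3_def)
        next
          case False then show ?thesis using vx vy by simp
        qed
      qed
    qed
  qed
  show "g3 l ` listed_roots k l = std_A (k + 3)"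
  proof
    show "g3 l ` listed_roots k l \<subseteq> std_A (k + 3)"
    proof (rule image_subsetI)
      fix v assume "v \<in> listed_roots k l"
      then show "g3 l v \<in> std_A (k + 3)" unfolding mem_listed
      proof
        assume "\<exists>i j. 1 \<le> i \<and> i \<le> l \<and> 1 \<le> j \<and> j \<le> l \<and> i \<noteq> j \<and> v = vdiff (ell i) (ell j)"
        then obtain i j where h: "1 \<le> i" "i \<le> l" "1 \<le> j" "j \<le> l" "i \<noteq> j" "v = vdiff (ell i) (ell j)" by blast
        have "g3 l v = vdiff (ell i) (ell j)" using h by (auto simp: g3_def A_val)
        then show ?thesis using h l stdA_mem[of i "k+3" j] by auto
      next
        assume "\<exists>s I. (s = 1 \<or> s = -1) \<and> I \<subseteq> {1..l} \<and> card I = k + 2 \<and> v = rB s I"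
        then obtain s I where h: "s = 1 \<or> s = -1" "I \<subseteq> {1..l}" "card I = k + 2" "v = rB s I" by blast
        obtain a where a: "1 \<le> a" "a \<le> l" "I = {1..l} - {a}" using card_compl1[OF h(2)] h(3) l by auto
        have e: "g3 l v = (\<lambda>j. s * vdiff (ell a) (ell 0) j)" using h(4) a by (auto simp: g3_def A_val rB_def)
        from h(1) show ?thesis
        proof
          assume "s = 1"
          then have "g3 l v = vdiff (ell a) (ell 0)" using e by simp
          then show ?thesis using a l stdA_mem[of a "k+3" 0] by auto
        next
          assume "s = -1"
          then have "g3 l v = vdiff (ell 0) (ell a)" using e by (auto simp: A_val)
          then show ?thesis using a l stdA_mem[of 0 "k+3" a] by auto
        qed
      qed
    qed
    show "std_A (k + 3) \<subseteq> g3 l ` listed_roots k l"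
    proof
      fix t assume "t \<in> std_A (k + 3)"
      then obtain i j where h: "i \<le> l" "j \<le> l" "i \<noteq> j" "t = vdiff (ell i) (ell j)"
        unfolding std_A_def using l by auto
      have cI: "\<And>a. 1 \<le> a \<Longrightarrow> a \<le> l \<Longrightarrow> card ({1..l} - {a}) = k + 2" using l by auto
      consider "i \<noteq> 0" "j \<noteq> 0" | "j = 0" | "i = 0" by blast
      then show "t \<in> g3 l ` listed_roots k l"
      proof cases
        case 1
        show ?thesis
        proof (rule image_eqI)
          show "vdiff (ell i) (ell j) \<in> listed_roots k l" using 1 h by (intro listed_A) auto
          show "t = g3 l (vdiff (ell i) (ell j))" using 1 h by (auto simp: g3_def A_val)
        qed
      next
        case 2
        show ?thesis
        proof (rule image_eqI)
          show "rB 1 ({1..l} - {i}) \<in> listed_roots k l" using 2 h cI[of i] by (intro listed_B) auto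
          show "t = g3 l (rB 1 ({1..l} - {i}))" using 2 h by (auto simp: g3_def A_val rB_def)
        qed
      next
        case 3
        show ?thesis
        proof (rule image_eqI)
          show "rB (-1) ({1..l} - {j}) \<in> listed_roots k l" using 3 h cI[of j] by (intro listed_B) auto
          show "t = g3 l (rB (-1) ({1..l} - {j}))" using 3 h by (auto simp: g3_def A_val rB_def)
        qed
      qed
    qed
  qed
qed


definition g2 :: "nat \<Rightarrow> (nat \<Rightarrow> real) \<Rightarrow> nat \<Rightarrow> real" where
  "g2 l x = (\<lambda>j. if j + 1 \<le> l then x (j + 1) + x 0 else if j = l then x 0 else if j = l + 1 then - x 0 else 0)"

lemma iso2:
  assumes k: "k > 0" and l: "l = k + 2"
  shows "root_iso (listed_roots k l) (std_A_A1 (k + 1))"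
proof (rule iso_intro[where g = "g2 l"])
  show "\<And>x y. g2 l (\<lambda>j. x j + y j) = (\<lambda>j. g2 l x j + g2 l y j)" by (auto simp: g2_def)
  show "\<And>c x. g2 l (\<lambda>j. c * x j) = (\<lambda>j. c * g2 l x j)" by (auto simp: g2_def algebra_simps)
  show "inj_on (g2 l) (rspan (listed_roots k l))"
  proof (rule inj_onI)
    fix x y assume x: "x \<in> rspan (listed_roots k l)" and y: "y \<in> rspan (listed_roots k l)" and e: "g2 l x = g2 l y"
    have vx: "\<forall>m>l. x m = 0" and vy: "\<forall>m>l. y m = 0" using span_props(1)[OF k x] span_props(1)[OF k y] by auto
    have 0: "x 0 = y 0" using fun_cong[OF e, of l] by (simp add: g2_def)
    show "x = y"
    proof
      fix m
      show "x m = y m"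
      proof (cases "m = 0")
        case True then show ?thesis using 0 by simp
      next
        case False
        show ?thesis
        proof (cases "m \<le> l")
          case True
          have "m - 1 + 1 = m" using False by simp
          then show ?thesis using fun_cong[OF e, of "m - 1"] 0 True by (simp add: g2_def)
        next
          case False then show ?thesis using vx vy by simp
        qed
      qed
    qed
  qed
  have SA: "std_A_A1 (k+1) = std_A (k+1) \<union> {vdiff (ell (k+2)) (ell (k+3)), vdiff (ell (k+3)) (ell (k+2))}"
    unfolding std_A_A1_def by (simp only: add.assoc one_add_one numeral_One[symmetric] numeral_plus_numeral) simp
  have A1: "vdiff (ell (k+2)) (ell (k+3)) \<in> std_A_A1 (k+1)" "vdiff (ell (k+3)) (ell (k+2)) \<in> std_A_A1 (k+1)"
    unfolding SA by blast+
  have A0: "\<And>i j. i \<le> k + 1 \<Longrightarrow> j \<le> k + 1 \<Longrightarrow> i \<noteq> j \<Longrightarrow> vdiff (ell i) (ell j) \<in> std_A_A1 (k+1)"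
    unfolding std_A_A1_def using stdA_mem by blast
  show "g2 l ` listed_roots k l = std_A_A1 (k + 1)"
  proof
    show "g2 l ` listed_roots k l \<subseteq> std_A_A1 (k + 1)"
    proof (rule image_subsetI)
      fix v assume "v \<in> listed_roots k l"
      then show "g2 l v \<in> std_A_A1 (k + 1)" unfolding mem_listed
      proof
        assume "\<exists>i j. 1 \<le> i \<and> i \<le> l \<and> 1 \<le> j \<and> j \<le> l \<and> i \<noteq> j \<and> v = vdiff (ell i) (ell j)"
        then obtain i j where h: "1 \<le> i" "i \<le> l" "1 \<le> j" "j \<le> l" "i \<noteq> j" "v = vdiff (ell i) (ell j)" by blast
        have "g2 l v = vdiff (ell (i - 1)) (ell (j - 1))"
        proof
          fix m show "g2 l v m = vdiff (ell (i - 1)) (ell (j - 1)) m"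
            using h by (cases "m + 1 \<le> l") (auto simp: g2_def A_val)
        qed
        moreover have "vdiff (ell (i - 1)) (ell (j - 1)) \<in> std_A_A1 (k+1)" using h l by (intro A0) auto
        ultimately show ?thesis by simp
      next
        assume "\<exists>s I. (s = 1 \<or> s = -1) \<and> I \<subseteq> {1..l} \<and> card I = k + 2 \<and> v = rB s I"
        then obtain s I where h: "s = 1 \<or> s = -1" "I \<subseteq> {1..l}" "card I = k + 2" "v = rB s I" by blast
        have "I = {1..l}" using card_subset_eq[OF _ h(2)] h(3) l by simp
        then have e: "g2 l v = (\<lambda>j. s * vdiff (ell (k+2)) (ell (k+3)) j)" using h(4) l by (auto simp: g2_def A_val rB_def)
        from h(1) show ?thesis
        proof
          assume "s = 1"
          then show ?thesis using e A1 by simp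
        next
          assume "s = -1"
          then have "g2 l v = vdiff (ell (k+3)) (ell (k+2))" using e by (auto simp: A_val)
          then show ?thesis using A1 by simp
        qed
      qed
    qed
    show "std_A_A1 (k + 1) \<subseteq> g2 l ` listed_roots k l"
    proof
      fix t assume "t \<in> std_A_A1 (k + 1)"
      then consider "t \<in> std_A (k + 1)" | "t = vdiff (ell (k+2)) (ell (k+3))" | "t = vdiff (ell (k+3)) (ell (k+2))"
        unfolding SA by blast
      then show "t \<in> g2 l ` listed_roots k l"
      proof cases
        case 1
        then obtain i j where h: "i \<le> k + 1" "j \<le> k + 1" "i \<noteq> j" "t = vdiff (ell i) (ell j)"
          unfolding std_A_def by auto
        show ?thesis
        proof (rule image_eqI)
          show "vdiff (ell (i+1)) (ell (j+1)) \<in> listed_roots k l" using h l by (intro listed_A) auto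
          show "t = g2 l (vdiff (ell (i+1)) (ell (j+1)))" using h l by (auto simp: g2_def A_val)
        qed
      next
        case 2
        show ?thesis
        proof (rule image_eqI)
          show "rB 1 {1..l} \<in> listed_roots k l" using l by (intro listed_B) auto
          show "t = g2 l (rB 1 {1..l})" using 2 l by (auto simp: g2_def A_val rB_def)
        qed
      next
        case 3
        show ?thesis
        proof (rule image_eqI)
          show "rB (-1) {1..l} \<in> listed_roots k l" using l by (intro listed_B) auto
          show "t = g2 l (rB (-1) {1..l})" using 3 l by (auto simp: g2_def A_val rB_def)
        qed
      qed
    qed
  qed
qed


lemma span_sum:
  assumes k: "k > 0" and x: "x \<in> rspan (listed_roots k l)"
  shows "(\<Sum>m=1..l. x m) = - (real k + 2) * x 0"
proof -
  have orth: "form k l x (omega k l) = 0" using span_props(2)[OF k x] .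
  have "(\<Sum>m=1..l. x m * omega k l m) = (\<Sum>m=1..l. x m)" by (rule sum.cong) (auto simp: omega_def)
  then have "form k l x (omega k l) = real k * x 0 * (- (real k + 2) / real k) - (\<Sum>m=1..l. x m)"
    by (simp add: form_def omega_def)
  then have "real k * ((\<Sum>m=1..l. x m) + (real k + 2) * x 0) = 0" using orth k by (simp add: field_simps)
  then have "(\<Sum>m=1..l. x m) + (real k + 2) * x 0 = 0" using k by simp
  then show ?thesis by (simp add: algebra_simps)
qed

lemma card_compl2:
  assumes "I \<subseteq> {1..l}" "card I + 2 = l"
  obtains a b where "1 \<le> a" "a < b" "b \<le> l" "I = {1..l} - {a, b}"
proof -
  have "card ({1..l} - I) = 2" using assms by (simp add: card_Diff_subset finite_subset)
  then obtain a b where ab: "{1..l} - I = {a, b}" "a \<noteq> b" by (auto simp: card_2_iff)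
  then have I: "I = {1..l} - {a, b}" using assms(1) by blast
  have r: "1 \<le> a" "a \<le> l" "1 \<le> b" "b \<le> l" using ab by auto
  show ?thesis
  proof (cases "a < b")
    case True then show ?thesis using that r I by blast
  next
    case False then have "b < a" using ab by simp
    moreover have "I = {1..l} - {b, a}" using I by blast
    ultimately show ?thesis using that r by blast
  qed
qed

lemma stdD_mem: "i < i' \<Longrightarrow> i' < n \<Longrightarrow> s = 1 \<or> s = -1 \<Longrightarrow> t = 1 \<or> t = -1 \<Longrightarrow> (\<lambda>j. s * ell i j + t * ell i' j) \<in> std_D n"
  unfolding std_D_def by blast

lemma ell_val: "ell i m = (if m = i then 1 else 0)" by (simp add: ell_def)

definition g4 :: "nat \<Rightarrow> (nat \<Rightarrow> real) \<Rightarrow> nat \<Rightarrow> real" where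
  "g4 l x = (\<lambda>j. if j < l then x (j + 1) + x 0 else 0)"

lemma iso4:
  assumes k: "k > 0" and l: "l = k + 4"
  shows "root_iso (listed_roots k l) (std_D (k + 4))"
proof (rule iso_intro[where g = "g4 l"])
  show "\<And>x y. g4 l (\<lambda>j. x j + y j) = (\<lambda>j. g4 l x j + g4 l y j)" by (auto simp: g4_def)
  show "\<And>c x. g4 l (\<lambda>j. c * x j) = (\<lambda>j. c * g4 l x j)" by (auto simp: g4_def algebra_simps)
  show "inj_on (g4 l) (rspan (listed_roots k l))"
  proof (rule inj_onI)
    fix x y assume x: "x \<in> rspan (listed_roots k l)" and y: "y \<in> rspan (listed_roots k l)" and e: "g4 l x = g4 l y"
    have vx: "\<forall>m>l. x m = 0" and vy: "\<forall>m>l. y m = 0" using span_props(1)[OF k x] span_props(1)[OF k y] by auto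
    have pt: "\<And>m. 1 \<le> m \<Longrightarrow> m \<le> l \<Longrightarrow> x m + x 0 = y m + y 0"
    proof -
      fix m assume m: "1 \<le> m" "m \<le> l"
      then have "m - 1 + 1 = m" "m - 1 < l" by auto
      then show "x m + x 0 = y m + y 0" using fun_cong[OF e, of "m - 1"] by (simp add: g4_def)
    qed
    have "(\<Sum>m=1..l. x m + x 0) = (\<Sum>m=1..l. y m + y 0)" by (rule sum.cong) (auto intro: pt)
    then have "(\<Sum>m=1..l. x m) + real l * x 0 = (\<Sum>m=1..l. y m) + real l * y 0"
      by (simp add: sum.distrib)
    then have "- (real k + 2) * x 0 + real l * x 0 = - (real k + 2) * y 0 + real l * y 0"
      unfolding span_sum[OF k x] span_sum[OF k y] .
    then have 0: "x 0 = y 0" using l by (simp add: algebra_simps)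
    show "x = y"
    proof
      fix m
      show "x m = y m"
      proof (cases "m = 0")
        case True then show ?thesis using 0 by simp
      next
        case False
        show ?thesis
        proof (cases "m \<le> l")
          case True then show ?thesis using pt[of m] 0 False by simp
        next
          case False then show ?thesis using vx vy by simp
        qed
      qed
    qed
  qed
  show "g4 l ` listed_roots k l = std_D (k + 4)"
  proof
    show "g4 l ` listed_roots k l \<subseteq> std_D (k + 4)"
    proof (rule image_subsetI)
      fix v assume "v \<in> listed_roots k l"
      then show "g4 l v \<in> std_D (k + 4)" unfolding mem_listed
      proof
        assume "\<exists>i j. 1 \<le> i \<and> i \<le> l \<and> 1 \<le> j \<and> j \<le> l \<and> i \<noteq> j \<and> v = vdiff (ell i) (ell j)"
        then obtain i j where h: "1 \<le> i" "i \<le> l" "1 \<le> j" "j \<le> l" "i \<noteq> j" "v = vdiff (ell i) (ell j)" by blast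
        have e: "g4 l v = (\<lambda>m. 1 * ell (i - 1) m + (-1) * ell (j - 1) m)"
        proof
          fix m show "g4 l v m = 1 * ell (i - 1) m + (-1) * ell (j - 1) m"
            using h by (cases "m < l") (auto simp: g4_def A_val ell_val)
        qed
        show ?thesis
        proof (cases "i < j")
          case True then show ?thesis unfolding e using h l by (intro stdD_mem) auto
        next
          case False
          have "g4 l v = (\<lambda>m. (-1) * ell (j - 1) m + 1 * ell (i - 1) m)" unfolding e by (auto simp: algebra_simps)
          moreover have "(\<lambda>m. (-1) * ell (j - 1) m + 1 * ell (i - 1) m) \<in> std_D (k + 4)"
            using h l False by (intro stdD_mem) auto
          ultimately show ?thesis by simp
        qed
      next
        assume "\<exists>s I. (s = 1 \<or> s = -1) \<and> I \<subseteq> {1..l} \<and> card I = k + 2 \<and> v = rB s I"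
        then obtain s I where h: "s = 1 \<or> s = -1" "I \<subseteq> {1..l}" "card I = k + 2" "v = rB s I" by blast
        obtain a b where ab: "1 \<le> a" "a < b" "b \<le> l" "I = {1..l} - {a, b}" using card_compl2[OF h(2)] h(3) l by auto
        have e: "g4 l v = (\<lambda>m. s * ell (a - 1) m + s * ell (b - 1) m)"
        proof
          fix m show "g4 l v m = s * ell (a - 1) m + s * ell (b - 1) m"
            using h(4) ab by (cases "m < l") (auto simp: g4_def rB_def ell_val)
        qed
        show ?thesis unfolding e using h(1) ab l by (intro stdD_mem) auto
      qed
    qed
    show "std_D (k + 4) \<subseteq> g4 l ` listed_roots k l"
    proof
      fix u assume "u \<in> std_D (k + 4)"
      then obtain i i' s t where h: "i < i'" "i' < l" "s = 1 \<or> s = -1" "t = 1 \<or> t = -1"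
        "u = (\<lambda>j. s * ell i j + t * ell i' j)"
        unfolding std_D_def using l by auto
      have cI: "card ({1..l} - {i+1, i'+1}) = k + 2" using h l by (simp add: card_Diff_subset)
      consider "s = 1" "t = -1" | "s = -1" "t = 1" | "s = t" using h by auto
      then show "u \<in> g4 l ` listed_roots k l"
      proof cases
        case 1
        show ?thesis
        proof (rule image_eqI)
          show "vdiff (ell (i+1)) (ell (i'+1)) \<in> listed_roots k l" using h by (intro listed_A) auto
          show "u = g4 l (vdiff (ell (i+1)) (ell (i'+1)))"
          proof
            fix m show "u m = g4 l (vdiff (ell (i+1)) (ell (i'+1))) m"
              using h 1 by (cases "m < l") (auto simp: g4_def A_val ell_val)
          qed
        qed
      next
        case 2
        show ?thesis
        proof (rule image_eqI)
          show "vdiff (ell (i'+1)) (ell (i+1)) \<in> listed_roots k l" using h by (intro listed_A) auto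
          show "u = g4 l (vdiff (ell (i'+1)) (ell (i+1)))"
          proof
            fix m show "u m = g4 l (vdiff (ell (i'+1)) (ell (i+1))) m"
              using h 2 by (cases "m < l") (auto simp: g4_def A_val ell_val)
          qed
        qed
      next
        case 3
        show ?thesis
        proof (rule image_eqI)
          show "rB s ({1..l} - {i+1, i'+1}) \<in> listed_roots k l" using h cI by (intro listed_B) auto
          show "u = g4 l (rB s ({1..l} - {i+1, i'+1}))"
          proof
            fix m show "u m = g4 l (rB s ({1..l} - {i+1, i'+1})) m"
              using h 3 by (cases "m < l") (auto simp: g4_def rB_def ell_val)
          qed
        qed
      qed
    qed
  qed
qed


theorem proposition5p5:
  fixes k l :: nat
  assumes "k > 0" and "l \<in> {k+2, k+3, k+4}"
  shows "listed_roots k l \<subseteq> rootsR k l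
    \<and> root_system (\<lambda>v w. - form k l v w) (listed_roots k l)
    \<and> (l = k + 2 \<longrightarrow> root_iso (listed_roots k l) (std_A_A1 (k + 1)))
    \<and> (l = k + 3 \<longrightarrow> root_iso (listed_roots k l) (std_A (k + 3)))
    \<and> (l = k + 4 \<longrightarrow> root_iso (listed_roots k l) (std_D (k + 4)))"
proof (intro conjI impI)
  have l: "l \<le> k + 4" "l \<ge> 1" using assms(2) by auto
  show "listed_roots k l \<subseteq> rootsR k l" by (rule listed_sub[OF assms(1)])
  show "root_system (\<lambda>v w. - form k l v w) (listed_roots k l)" by (rule is_root_system[OF assms(1) l])
  show "l = k + 2 \<Longrightarrow> root_iso (listed_roots k l) (std_A_A1 (k + 1))" by (rule iso2[OF assms(1)])
  show "l = k + 3 \<Longrightarrow> root_iso (listed_roots k l) (std_A (k + 3))" by (rule iso3[OF assms(1)])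
  show "l = k + 4 \<Longrightarrow> root_iso (listed_roots k l) (std_D (k + 4))" by (rule iso4[OF assms(1)])
qed

end
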